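(* For every antisymmetric state $\rho_\mathcal{A}$ on $\mathbb{C}^d\otimes\mathbb{C}^d$ (i.e. $\rho_\mathcal{A}=P_\mathcal{A}\rho_\mathcal{A}P_\mathcal{A}$), it holds that $2/(d(d+1)+2)\leq p^\textrm{PPT}(\rho_\mathcal{A}) \leq 1/2$, where $p^\textrm{PPT}(\rho_\mathcal{A})$ is the optimal value of the semidefinite program: maximize $\operatorname{Tr}(P_\mathcal{A}\sigma)$ over $\sigma$ subject to $P_\mathcal{A}\sigma P_\mathcal{A} = \operatorname{Tr}(P_\mathcal{A}\sigma)\rho_\mathcal{A}$, $\sigma\geq 0$, $\operatorname{Tr}(\sigma)=1$, $\sigma^\Gamma\geq 0$.
   Context: Two $d$-dimensional systems $A,B$. $V$ is the swap operator, $P_\mathcal{S}=(\mathbb{1}+V)/2$ and $P_\mathcal{A}=(\mathbb{1}-V)/2$ are the projectors onto the symmetric and antisymmetric subspaces (with $\mathbb{1}$ the identity operator), of dimensions $d_\mathcal{S}=d(d+1)/2$ and $d_\mathcal{A}=d(d-1)/2$. $\sigma^\Gamma$ denotes the partial transpose of $\sigma$. *)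

theory Defs
  imports "Jordan_Normal_Form.Matrix" "Jordan_Normal_Form.Conjugate"
begin

text \<open>Operators on C^d (x) C^d are (d*d) x (d*d) complex matrices; the basis vector
  |a> (x) |b> (a, b < d) has index a*d + b.\<close>

definition mtrace :: "complex mat \<Rightarrow> complex" where
  "mtrace A = (\<Sum>i<dim_row A. A $$ (i,i))"

definition psd :: "nat \<Rightarrow> complex mat \<Rightarrow> bool" where
  "psd n M \<longleftrightarrow> M \<in> carrier_mat n n \<and>
     (\<forall>v \<in> carrier_vec n. Im (scalar_prod (conjugate v) (M *\<^sub>v v)) = 0
                          \<and> Re (scalar_prod (conjugate v) (M *\<^sub>v v)) \<ge> 0)"

definition swap_op :: "nat \<Rightarrow> complex mat" where
  "swap_op d = mat (d*d) (d*d) (\<lambda>(i,j). if i = (j mod d) * d + j div d then 1 else 0)"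

definition P_antisym :: "nat \<Rightarrow> complex mat" where
  "P_antisym d = (1/2 :: complex) \<cdot>\<^sub>m (1\<^sub>m (d*d) - swap_op d)"

definition P_sym :: "nat \<Rightarrow> complex mat" where
  "P_sym d = (1/2 :: complex) \<cdot>\<^sub>m (1\<^sub>m (d*d) + swap_op d)"

text \<open>Partial transpose (on the second factor):
  sigma^Gamma_{(a,b),(a',b')} = sigma_{(a,b'),(a',b)}.\<close>
definition partial_transpose :: "nat \<Rightarrow> complex mat \<Rightarrow> complex mat" where
  "partial_transpose d \<sigma> = mat (d*d) (d*d)
     (\<lambda>(i,j). \<sigma> $$ ((i div d) * d + j mod d, (j div d) * d + i mod d))"

definition is_state :: "nat \<Rightarrow> complex mat \<Rightarrow> bool" where
  "is_state n \<rho> \<longleftrightarrow> psd n \<rho> \<and> mtrace \<rho> = 1"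

definition ppt_feasible :: "nat \<Rightarrow> complex mat \<Rightarrow> complex mat \<Rightarrow> bool" where
  "ppt_feasible d \<rho> \<sigma> \<longleftrightarrow>
     P_antisym d * \<sigma> * P_antisym d = mtrace (P_antisym d * \<sigma>) \<cdot>\<^sub>m \<rho>
     \<and> psd (d*d) \<sigma> \<and> mtrace \<sigma> = 1 \<and> psd (d*d) (partial_transpose d \<sigma>)"

definition p_PPT :: "nat \<Rightarrow> complex mat \<Rightarrow> real" where
  "p_PPT d \<rho> = Sup {Re (mtrace (P_antisym d * \<sigma>)) | \<sigma>. ppt_feasible d \<rho> \<sigma>}"

end

theory Submission
  imports Defs "HOL-Analysis.L2_Norm"
begin


definition sw :: "nat \<Rightarrow> nat \<Rightarrow> nat" where "sw d i = (i mod d) * d + i div d"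

lemma idx_eq:
  fixes a b a' b' d :: nat assumes "b < d" "b' < d"
  shows "(a*d+b = a'*d+b') \<longleftrightarrow> (a = a' \<and> b = b')"
proof
  assume h: "a*d+b = a'*d+b'"
  have "(a*d+b) div d = a" "(a'*d+b') div d = a'" "(a*d+b) mod d = b" "(a'*d+b') mod d = b'"
    using assms by auto
  then show "a = a' \<and> b = b'" using h by metis
qed simp

lemma sw_ab: "b < d \<Longrightarrow> sw d (a*d+b) = b*d + a"
  unfolding sw_def by simp

lemma sw_lt: "i < d*d \<Longrightarrow> sw d i < d*d"
proof -
  assume i: "i < d*d"
  then have d: "d > 0" by (cases d) auto
  have "i div d < d" using i by (simp add: less_mult_imp_div_less)
  moreover have "i mod d < d" using d by simp
  ultimately have "(i mod d) * d + i div d < (i mod d) * d + d" by simp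
  also have "\<dots> = (i mod d + 1) * d" by simp
  also have "\<dots> \<le> d * d" using \<open>i mod d < d\<close> by (metis Suc_eq_plus1 Suc_leI mult_le_mono1)
  finally show ?thesis unfolding sw_def .
qed

lemma sw_sw: "i < d*d \<Longrightarrow> sw d (sw d i) = i"
proof -
  assume i: "i < d*d"
  then have d: "d > 0" by (cases d) auto
  have "i div d < d" using i by (simp add: less_mult_imp_div_less)
  then have "sw d (sw d i) = (i div d) * d + i mod d"
    unfolding sw_def[of d i] using d by (simp add: sw_ab)
  also have "\<dots> = i" by simp
  finally show ?thesis .
qed

lemma sw_eq: "i < d*d \<Longrightarrow> k < d*d \<Longrightarrow> (i = sw d k) \<longleftrightarrow> (k = sw d i)"
  using sw_sw by metis

lemma sum_split: fixes f :: "nat \<Rightarrow> 'a::comm_monoid_add" shows "(\<Sum>i<d*d. f i) = (\<Sum>a<d. \<Sum>b<d. f (a*d+b))"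
proof -
  have "(\<Sum>i<d*d. f i) = (\<Sum>a<d. sum f {a*d..<a*d+d})"
    using sum.nat_group[of f d d] by simp
  also have "\<dots> = (\<Sum>a<d. \<Sum>b<d. f (a*d+b))"
  proof (rule sum.cong[OF refl])
    fix a
    show "sum f {a*d..<a*d+d} = (\<Sum>b<d. f (a*d+b))"
      using sum.atLeastLessThan_shift_0[of f "a*d" "a*d+d"] by (simp add: atLeast0LessThan add.commute comp_def)
  qed
  finally show ?thesis .
qed

lemma mult_entry:
  assumes "A \<in> carrier_mat n n" "B \<in> carrier_mat n n" "i < n" "j < n"
  shows "(A*B) $$ (i,j) = (\<Sum>k<n. A $$ (i,k) * B $$ (k,j))"
  using assms by (simp add: scalar_prod_def atLeast0LessThan)

lemma swap_carrier: "swap_op d \<in> carrier_mat (d*d) (d*d)"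
  unfolding swap_op_def by simp
lemma PA_carrier: "P_antisym d \<in> carrier_mat (d*d) (d*d)"
  unfolding P_antisym_def swap_op_def carrier_mat_def by simp
lemma PS_carrier: "P_sym d \<in> carrier_mat (d*d) (d*d)"
  unfolding P_sym_def swap_op_def carrier_mat_def by simp

lemma swap_entry: "i < d*d \<Longrightarrow> j < d*d \<Longrightarrow> swap_op d $$ (i,j) = (if i = sw d j then 1 else 0)"
  unfolding swap_op_def sw_def by simp
lemma PA_entry: "i < d*d \<Longrightarrow> j < d*d \<Longrightarrow>
  P_antisym d $$ (i,j) = (if i = j then 1/2 else 0) - (if i = sw d j then 1/2 else 0)"
  unfolding P_antisym_def using swap_carrier[of d] by (simp add: swap_entry)
lemma PS_entry: "i < d*d \<Longrightarrow> j < d*d \<Longrightarrow>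
  P_sym d $$ (i,j) = (if i = j then 1/2 else 0) + (if i = sw d j then 1/2 else 0)"
  unfolding P_sym_def using swap_carrier[of d] by (simp add: swap_entry)

lemma PA_left: assumes "i < d*d"
  shows "(\<Sum>k<d*d. P_antisym d $$ (i,k) * F k) = (F i - F (sw d i))/2"
proof -
  have "(\<Sum>k<d*d. P_antisym d $$ (i,k) * F k) =
     (\<Sum>k<d*d. (if i = k then F k/2 else 0)) - (\<Sum>k<d*d. (if k = sw d i then F k/2 else 0))"
    unfolding sum_subtractf[symmetric]
  proof (rule sum.cong[OF refl])
    fix k assume "k \<in> {..<d*d}"
    then have k: "k < d*d" by simp
    have e: "(i = sw d k) = (k = sw d i)" by (rule sw_eq[OF assms k])
    show "P_antisym d $$ (i,k) * F k = (if i = k then F k/2 else 0) - (if k = sw d i then F k/2 else 0)"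
      using assms k by (simp add: PA_entry e)
  qed
  also have "\<dots> = (F i - F (sw d i))/2" using assms sw_lt[OF assms] by (simp add: diff_divide_distrib)
  finally show ?thesis .
qed

lemma PA_right: assumes "j < d*d"
  shows "(\<Sum>k<d*d. F k * P_antisym d $$ (k,j)) = (F j - F (sw d j))/2"
proof -
  have "(\<Sum>k<d*d. F k * P_antisym d $$ (k,j)) =
     (\<Sum>k<d*d. (if k = j then F k/2 else 0)) - (\<Sum>k<d*d. (if k = sw d j then F k/2 else 0))"
    unfolding sum_subtractf[symmetric]
    by (rule sum.cong[OF refl]) (use assms in \<open>simp add: PA_entry\<close>)
  also have "\<dots> = (F j - F (sw d j))/2" using assms sw_lt[OF assms] by (simp add: diff_divide_distrib)
  finally show ?thesis .
qed



definition bf :: "nat \<Rightarrow> (nat \<Rightarrow> nat \<Rightarrow> complex) \<Rightarrow> (nat \<Rightarrow> complex) \<Rightarrow> (nat \<Rightarrow> complex) \<Rightarrow> complex" where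
  "bf n H f g = (\<Sum>i<n. \<Sum>j<n. cnj (f i) * H i j * g j)"

abbreviation qf where "qf n H f \<equiv> bf n H f f"

lemma bf_add_left: "bf n H (\<lambda>k. f k + g k) h = bf n H f h + bf n H g h"
  unfolding bf_def by (simp add: algebra_simps sum.distrib)
lemma bf_add_right: "bf n H h (\<lambda>k. f k + g k) = bf n H h f + bf n H h g"
  unfolding bf_def by (simp add: algebra_simps sum.distrib)

lemma qf_add: "qf n H (\<lambda>k. f k + g k) = qf n H f + bf n H f g + bf n H g f + qf n H g"
  by (simp add: bf_add_left bf_add_right)

lemma bf_delta_right: "j0 < n \<Longrightarrow> bf n H f (\<lambda>k. if k = j0 then \<beta> else 0) = (\<Sum>i<n. cnj (f i) * H i j0) * \<beta>"
  unfolding bf_def by (simp add: sum_distrib_right if_distrib cong: if_cong)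

lemma bf_delta_left: "i0 < n \<Longrightarrow> bf n H (\<lambda>k. if k = i0 then \<alpha> else 0) g = cnj \<alpha> * (\<Sum>j<n. H i0 j * g j)"
proof -
  assume i0: "i0 < n"
  have "bf n H (\<lambda>k. if k = i0 then \<alpha> else 0) g = (\<Sum>i<n. if i = i0 then cnj \<alpha> * (\<Sum>j<n. H i j * g j) else 0)"
    unfolding bf_def by (rule sum.cong) (auto simp: sum_distrib_left mult.assoc)
  then show ?thesis using i0 by simp
qed

lemma bf_delta2: "i0 < n \<Longrightarrow> j0 < n \<Longrightarrow>
   bf n H (\<lambda>k. if k = i0 then \<alpha> else 0) (\<lambda>k. if k = j0 then \<beta> else 0) = cnj \<alpha> * H i0 j0 * \<beta>"
  by (simp add: bf_delta_left if_distrib cong: if_cong)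

lemma bf_cong: "(\<And>k. k < n \<Longrightarrow> f k = f' k) \<Longrightarrow> (\<And>k. k < n \<Longrightarrow> g k = g' k) \<Longrightarrow> bf n H f g = bf n H f' g'"
  unfolding bf_def by (intro sum.cong) auto

lemma qf_vec: assumes "A \<in> carrier_mat n n" "v \<in> carrier_vec n"
  shows "scalar_prod (conjugate v) (A *\<^sub>v v) = qf n (\<lambda>i j. A $$ (i,j)) (\<lambda>i. v $ i)"
  using assms unfolding bf_def scalar_prod_def
  by (simp add: atLeast0LessThan sum_distrib_left mult.assoc scalar_prod_def)

lemma psd_qf: assumes "psd n A"
  shows "Im (qf n (\<lambda>i j. A $$ (i,j)) f) = 0 \<and> 0 \<le> Re (qf n (\<lambda>i j. A $$ (i,j)) f)"
proof -
  have A: "A \<in> carrier_mat n n" using assms unfolding psd_def by simp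
  have v: "vec n f \<in> carrier_vec n" by simp
  have "qf n (\<lambda>i j. A $$ (i,j)) f = qf n (\<lambda>i j. A $$ (i,j)) (\<lambda>i. vec n f $ i)"
    by (rule bf_cong) auto
  also have "\<dots> = scalar_prod (conjugate (vec n f)) (A *\<^sub>v (vec n f))"
    using qf_vec[OF A v] by simp
  finally show ?thesis using assms v unfolding psd_def by simp
qed

lemma qf_psd: assumes "A \<in> carrier_mat n n"
  and "\<And>f. Im (qf n (\<lambda>i j. A $$ (i,j)) f) = 0 \<and> 0 \<le> Re (qf n (\<lambda>i j. A $$ (i,j)) f)"
  shows "psd n A"
  unfolding psd_def using assms qf_vec by auto

lemma herm_from_qf:
  assumes im: "\<And>f. Im (qf n H f) = 0" and i: "i < n" and j: "j < n"
  shows "H j i = cnj (H i j)"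
proof -
  define e :: "nat \<Rightarrow> complex \<Rightarrow> nat \<Rightarrow> complex" where "e = (\<lambda>a (c::complex) k. if k = a then c else (0::complex))"
  have d1: "\<And>a. a < n \<Longrightarrow> Im (H a a) = 0"
  proof -
    fix a assume a: "a < n"
    have "qf n H (e a 1) = H a a" unfolding e_def using bf_delta2[OF a a, of H 1 1] by simp
    then show "Im (H a a) = 0" using im[of "e a 1"] by simp
  qed
  show ?thesis
  proof (cases "i = j")
    case True
    then show ?thesis using d1[OF i] by (simp add: complex_eq_iff)
  next
    case False
    have q1: "qf n H (\<lambda>k. e i 1 k + e j 1 k) = H i i + H i j + H j i + H j j"
      unfolding qf_add e_def using bf_delta2[OF i i, of H] bf_delta2[OF i j, of H] bf_delta2[OF j i, of H] bf_delta2[OF j j, of H]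
      by simp
    have q2: "qf n H (\<lambda>k. e i 1 k + e j \<i> k) = H i i + \<i> * H i j - \<i> * H j i + H j j"
      unfolding qf_add e_def using bf_delta2[OF i i, of H] bf_delta2[OF i j, of H] bf_delta2[OF j i, of H] bf_delta2[OF j j, of H]
      by (simp add: algebra_simps)
    have a1: "Im (H i j) + Im (H j i) = 0" using im[of "\<lambda>k. e i 1 k + e j 1 k"] q1 d1[OF i] d1[OF j] by simp
    have a2: "Re (H i j) - Re (H j i) = 0" using im[of "\<lambda>k. e i 1 k + e j \<i> k"] q2 d1[OF i] d1[OF j] by simp
    show ?thesis using a1 a2 by (simp add: complex_eq_iff)
  qed
qed



lemma norm_sq_re: "Re (z * cnj z) = (cmod z)^2"
  by (simp only: complex_mult_cnj cmod_power2 Re_complex_of_real)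

lemma chol_gen:
  assumes "m \<le> n"
  shows "\<forall>H. (\<forall>i<n. \<forall>j<n. H j i = cnj (H i j)) \<longrightarrow> (\<forall>f. 0 \<le> Re (qf n H f))
     \<longrightarrow> (\<forall>i<n. \<forall>j<n. (i < m \<or> j < m) \<longrightarrow> H i j = 0)
     \<longrightarrow> (\<exists>g. \<forall>i<n. \<forall>j<n. H i j = (\<Sum>k\<in>{m..<n}. g k i * cnj (g k j)))"
  using assms
proof (induction m rule: inc_induct)
  case base
  show ?case
  proof (intro allI impI)
    fix H :: "nat \<Rightarrow> nat \<Rightarrow> complex"
    assume z: "\<forall>i<n. \<forall>j<n. (i < n \<or> j < n) \<longrightarrow> H i j = 0"
    show "\<exists>g. \<forall>i<n. \<forall>j<n. H i j = (\<Sum>k\<in>{n..<n}. g k i * cnj (g k j))"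
      using z by simp
  qed
next
  case (step m)
  show ?case
  proof (intro allI impI)
    fix H :: "nat \<Rightarrow> nat \<Rightarrow> complex"
    assume herm: "\<forall>i<n. \<forall>j<n. H j i = cnj (H i j)"
      and pos: "\<forall>f. 0 \<le> Re (qf n H f)"
      and zer: "\<forall>i<n. \<forall>j<n. (i < m \<or> j < m) \<longrightarrow> H i j = 0"
    have mn: "m < n" using step.hyps by linarith
    define e :: "nat \<Rightarrow> complex \<Rightarrow> nat \<Rightarrow> complex" where "e = (\<lambda>a c k. if k = a then c else 0)"
    define r where "r = Re (H m m)"
    have Hmm: "H m m = complex_of_real r"
    proof -
      have "H m m = cnj (H m m)" using herm mn by blast
      then have "Im (H m m) = 0" by (simp add: complex_eq_iff)
      then show ?thesis unfolding r_def by (simp add: complex_eq_iff)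
    qed
    have r0: "0 \<le> r"
    proof -
      have "qf n H (e m 1) = H m m" unfolding e_def using bf_delta2[OF mn mn, of H 1 1] by simp
      then show ?thesis using pos unfolding r_def by metis
    qed
    show "\<exists>g. \<forall>i<n. \<forall>j<n. H i j = (\<Sum>k\<in>{m..<n}. g k i * cnj (g k j))"
    proof (cases "r = 0")
      case True
      have row: "H j m = 0" if j: "j < n" for j
      proof (rule ccontr)
        assume z0: "H j m \<noteq> 0"
        define z where "z = H j m"
        have zp: "0 < (cmod z)^2" using z0 unfolding z_def by simp
        define t :: real where "t = (Re (H j j) + 1) / (2 * (cmod z)^2)"
        define \<alpha> where "\<alpha> = - complex_of_real t * cnj z"
        have Hmj: "H m j = cnj z" using herm j mn unfolding z_def by blast
        have "qf n H (\<lambda>k. e j 1 k + e m \<alpha> k) = H j j + z * \<alpha> + cnj \<alpha> * cnj z + cnj \<alpha> * H m m * \<alpha>"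
          unfolding qf_add e_def using bf_delta2[OF j j, of H] bf_delta2[OF j mn, of H] bf_delta2[OF mn j, of H]
            bf_delta2[OF mn mn, of H] Hmj unfolding z_def by simp
        also have "\<dots> = H j j - 2 * complex_of_real t * (z * cnj z)"
          using Hmm True unfolding \<alpha>_def by (simp add: algebra_simps)
        finally have "Re (qf n H (\<lambda>k. e j 1 k + e m \<alpha> k)) = Re (H j j) - 2 * t * (cmod z)^2"
          by (simp add: norm_sq_re[symmetric])
        also have "\<dots> = -1" unfolding t_def using zp by (simp add: field_simps)
        finally show False using pos by (metis neg_0_le_iff_le not_one_le_zero)
      qed
      have zer': "\<forall>i<n. \<forall>j<n. (i < Suc m \<or> j < Suc m) \<longrightarrow> H i j = 0"
      proof (intro allI impI)
        fix i j assume i: "i < n" and j: "j < n" and h: "i < Suc m \<or> j < Suc m"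
        show "H i j = 0"
        proof (cases "i < m \<or> j < m")
          case True then show ?thesis using zer i j by auto
        next
          case False
          then have "i = m \<or> j = m" using h by auto
          then show ?thesis using row[OF i] row[OF j] herm i j mn by (metis complex_cnj_zero)
        qed
      qed
      obtain g where g: "\<forall>i<n. \<forall>j<n. H i j = (\<Sum>k\<in>{Suc m..<n}. g k i * cnj (g k j))"
        using step.IH herm pos zer' by blast
      define g' where "g' = g(m := (\<lambda>_. 0))"
      have "\<forall>i<n. \<forall>j<n. H i j = (\<Sum>k\<in>{m..<n}. g' k i * cnj (g' k j))"
      proof (intro allI impI)
        fix i j assume i: "i < n" and j: "j < n"
        have "(\<Sum>k\<in>{m..<n}. g' k i * cnj (g' k j)) = g' m i * cnj (g' m j) + (\<Sum>k\<in>{Suc m..<n}. g' k i * cnj (g' k j))"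
          using mn by (simp add: sum.atLeast_Suc_lessThan)
        also have "\<dots> = (\<Sum>k\<in>{Suc m..<n}. g k i * cnj (g k j))"
          unfolding g'_def by simp
        finally show "H i j = (\<Sum>k\<in>{m..<n}. g' k i * cnj (g' k j))" using g i j by simp
      qed
      then show ?thesis by blast
    next
      case False
      then have rp: "0 < r" using r0 by simp
      define c where "c = complex_of_real r"
      have c0: "c \<noteq> 0" unfolding c_def using rp by simp
      have cc: "cnj c = c" unfolding c_def by simp
      define H' where "H' = (\<lambda>i j. H i j - H i m * cnj (H j m) / c)"
      have herm': "\<forall>i<n. \<forall>j<n. H' j i = cnj (H' i j)"
      proof (intro allI impI)
        fix i j assume i: "i < n" and j: "j < n"
        have "H j i = cnj (H i j)" using herm i j by blast
        then show "H' j i = cnj (H' i j)" unfolding H'_def using cc by simp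
      qed
      have pos': "\<forall>f. 0 \<le> Re (qf n H' f)"
      proof
        fix f
        define s where "s = (\<Sum>j<n. H m j * f j)"
        define \<alpha> where "\<alpha> = - s / c"
        have cs: "(\<Sum>i<n. cnj (f i) * H i m) = cnj s"
          unfolding s_def
        proof (simp, rule sum.cong[OF refl])
          fix i assume "i \<in> {..<n}"
          then have "H i m = cnj (H m i)" using herm mn by blast
          then show "cnj (f i) * H i m = cnj (H m i) * cnj (f i)" by simp
        qed
        have "qf n H' f = qf n H f - (\<Sum>i<n. \<Sum>j<n. (cnj (f i) * H i m) * (cnj (H j m) * f j)) / c"
          unfolding bf_def H'_def
          by (simp add: algebra_simps sum_subtractf sum_divide_distrib)
        also have "(\<Sum>i<n. \<Sum>j<n. (cnj (f i) * H i m) * (cnj (H j m) * f j)) = cnj s * s"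
        proof -
          have "(\<Sum>j<n. cnj (H j m) * f j) = s"
            unfolding s_def
          proof (rule sum.cong[OF refl])
            fix i assume "i \<in> {..<n}"
            then have "H m i = cnj (H i m)" using herm mn by blast
            then show "cnj (H i m) * f i = H m i * f i" by simp
          qed
          then show ?thesis by (simp add: sum_product[symmetric] cs)
        qed
        finally have q1: "qf n H' f = qf n H f - cnj s * s / c" .
        have "qf n H (\<lambda>k. f k + e m \<alpha> k) = qf n H f + cnj s * \<alpha> + cnj \<alpha> * s + cnj \<alpha> * c * \<alpha>"
          unfolding qf_add e_def bf_delta2[OF mn mn] bf_delta_right[OF mn] bf_delta_left[OF mn] cs
          using Hmm unfolding s_def c_def by simp
        also have "\<dots> = qf n H f - cnj s * s / c"
          unfolding \<alpha>_def using c0 cc by (simp add: field_simps)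
        finally show "0 \<le> Re (qf n H' f)" using q1 pos by metis
      qed
      have zer': "\<forall>i<n. \<forall>j<n. (i < Suc m \<or> j < Suc m) \<longrightarrow> H' i j = 0"
      proof (intro allI impI)
        fix i j assume i: "i < n" and j: "j < n" and h: "i < Suc m \<or> j < Suc m"
        show "H' i j = 0"
        proof (cases "i < m \<or> j < m")
          case True then show ?thesis using zer i j mn unfolding H'_def by auto
        next
          case False
          then have "i = m \<or> j = m" using h by auto
          then show ?thesis
          proof
            assume "i = m"
            moreover have "H m j = cnj (H j m)" using herm j mn by blast
            ultimately show ?thesis unfolding H'_def using Hmm c0 unfolding c_def by simp
          next
            assume "j = m"
            then show ?thesis unfolding H'_def using Hmm c0 unfolding c_def by simp
          qed
        qed
      qed
      obtain g where g: "\<forall>i<n. \<forall>j<n. H' i j = (\<Sum>k\<in>{Suc m..<n}. g k i * cnj (g k j))"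
        using step.IH herm' pos' zer' by blast
      define g' where "g' = g(m := (\<lambda>i. H i m / complex_of_real (sqrt r)))"
      have "\<forall>i<n. \<forall>j<n. H i j = (\<Sum>k\<in>{m..<n}. g' k i * cnj (g' k j))"
      proof (intro allI impI)
        fix i j assume i: "i < n" and j: "j < n"
        have "(\<Sum>k\<in>{m..<n}. g' k i * cnj (g' k j)) = g' m i * cnj (g' m j) + (\<Sum>k\<in>{Suc m..<n}. g' k i * cnj (g' k j))"
          using mn by (simp add: sum.atLeast_Suc_lessThan)
        also have "\<dots> = H i m * cnj (H j m) / c + H' i j"
        proof -
          define q where "q = complex_of_real (sqrt r)"
          have qq: "q * q = c" unfolding q_def c_def using rp by (simp flip: of_real_mult)
          have cq: "cnj q = q" unfolding q_def by simp
          have q0: "q \<noteq> 0" using qq c0 by auto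
          have "g' m i * cnj (g' m j) = H i m / q * (cnj (H j m) / q)"
            unfolding g'_def q_def[symmetric] using cq by simp
          also have "\<dots> = H i m * cnj (H j m) / c" using qq q0 by (simp add: field_simps)
          finally show ?thesis using g i j unfolding g'_def by simp
        qed
        also have "\<dots> = H i j" unfolding H'_def by simp
        finally show "H i j = (\<Sum>k\<in>{m..<n}. g' k i * cnj (g' k j))" by simp
      qed
      then show ?thesis by blast
    qed
  qed
qed

lemma chol:
  assumes "\<forall>i<n. \<forall>j<n. H j i = cnj (H i j)" "\<forall>f. 0 \<le> Re (qf n H f)"
  shows "\<exists>g. \<forall>i<n. \<forall>j<n. H i j = (\<Sum>k<n. g k i * cnj (g k j))"
proof -
  have z: "\<forall>i<n. \<forall>j<n. (i < (0::nat) \<or> j < 0) \<longrightarrow> H i j = 0" by simp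
  have "\<exists>g. \<forall>i<n. \<forall>j<n. H i j = (\<Sum>k\<in>{0..<n}. g k i * cnj (g k j))"
    using chol_gen[of 0 n] assms z by blast
  then show ?thesis by (simp only: atLeast0LessThan)
qed



lemma cmod_diff_sq: "(cmod (u - w))^2 = (cmod u)^2 + (cmod w)^2 - 2 * Re (u * cnj w)"
  by (simp only: cmod_power2) (simp add: power2_eq_square algebra_simps)
lemma cmod_add_sq: "(cmod (u + w))^2 = (cmod u)^2 + (cmod w)^2 + 2 * Re (u * cnj w)"
  by (simp only: cmod_power2) (simp add: power2_eq_square algebra_simps)

lemma wedge_bound:
  fixes x y :: "nat \<Rightarrow> complex"
  shows "(\<Sum>a<d. \<Sum>a'<d. (cmod (x a * y a' - x a' * y a))^2)
     \<le> 2 * (\<Sum>a<d. (cmod (x a))^2) * (\<Sum>a<d. (cmod (y a))^2)"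
proof -
  define z where "z = (\<Sum>a<d. x a * cnj (y a))"
  have e1: "(\<Sum>a<d. \<Sum>a'<d. (cmod (x a * y a'))^2) = (\<Sum>a<d. (cmod (x a))^2) * (\<Sum>a<d. (cmod (y a))^2)"
    by (simp add: norm_mult power_mult_distrib sum_product)
  have e2: "(\<Sum>a<d. \<Sum>a'<d. (cmod (x a' * y a))^2) = (\<Sum>a<d. (cmod (x a))^2) * (\<Sum>a<d. (cmod (y a))^2)"
    using e1 by (subst sum.swap) simp
  have e3: "(\<Sum>a<d. \<Sum>a'<d. Re (x a * y a' * cnj (x a' * y a))) = Re (z * cnj z)"
  proof -
    have "z * cnj z = (\<Sum>a<d. \<Sum>a'<d. x a * y a' * cnj (x a' * y a))"
      unfolding z_def by (simp add: sum_product cnj_sum algebra_simps)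
    then show ?thesis by (simp add: Re_sum)
  qed
  have "(\<Sum>a<d. \<Sum>a'<d. (cmod (x a * y a' - x a' * y a))^2)
      = (\<Sum>a<d. \<Sum>a'<d. (cmod (x a * y a'))^2) + (\<Sum>a<d. \<Sum>a'<d. (cmod (x a' * y a))^2)
        - 2 * (\<Sum>a<d. \<Sum>a'<d. Re (x a * y a' * cnj (x a' * y a)))"
    by (simp add: cmod_diff_sq sum.distrib sum_subtractf sum_distrib_left)
  also have "\<dots> = 2 * (\<Sum>a<d. (cmod (x a))^2) * (\<Sum>a<d. (cmod (y a))^2) - 2 * (cmod z)^2"
    using e1 e2 e3 norm_sq_re by simp
  finally show ?thesis by simp
qed

lemma minkowski:
  fixes f :: "'b \<Rightarrow> 'c \<Rightarrow> complex"
  assumes "finite B"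
  shows "L2_set (\<lambda>p. cmod (\<Sum>b\<in>B. f b p)) A \<le> (\<Sum>b\<in>B. L2_set (\<lambda>p. cmod (f b p)) A)"
  using assms
proof (induction B rule: finite_induct)
  case empty
  then show ?case by (simp add: L2_set_0')
next
  case (insert b B)
  have "L2_set (\<lambda>p. cmod (\<Sum>b\<in>insert b B. f b p)) A
      \<le> L2_set (\<lambda>p. cmod (f b p) + cmod (\<Sum>b\<in>B. f b p)) A"
    using insert by (intro L2_set_mono) (auto simp: norm_triangle_ineq)
  also have "\<dots> \<le> L2_set (\<lambda>p. cmod (f b p)) A + L2_set (\<lambda>p. cmod (\<Sum>b\<in>B. f b p)) A"
    by (rule L2_set_triangle_ineq)
  also have "\<dots> \<le> (\<Sum>b\<in>insert b B. L2_set (\<lambda>p. cmod (f b p)) A)"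
    using insert by simp
  finally show ?case .
qed

lemma pure_im:
  fixes X :: "nat \<Rightarrow> nat \<Rightarrow> complex"
  shows "Im (\<Sum>a<d. \<Sum>a'<d. X a a' * cnj (X a' a)) = 0"
proof -
  define S where "S = (\<Sum>a<d. \<Sum>a'<d. X a a' * cnj (X a' a))"
  have "cnj S = (\<Sum>a<d. \<Sum>a'<d. cnj (X a a') * X a' a)" unfolding S_def by (simp add: cnj_sum)
  also have "\<dots> = (\<Sum>a'<d. \<Sum>a<d. cnj (X a a') * X a' a)" by (rule sum.swap)
  also have "\<dots> = S" unfolding S_def by (simp add: mult.commute)
  finally have "cnj S = S" .
  then show ?thesis unfolding S_def[symmetric] by (simp add: complex_eq_iff)
qed

lemma pure_re_D:
  fixes X :: "nat \<Rightarrow> nat \<Rightarrow> complex"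
  shows "-(1/4) * (\<Sum>a<d. \<Sum>a'<d. (cmod (X a a' - X a' a))^2) \<le> Re (\<Sum>a<d. \<Sum>a'<d. X a a' * cnj (X a' a))"
proof -
  have "(\<Sum>a<d. \<Sum>a'<d. (cmod (X a a' + X a' a))^2)
     = (\<Sum>a<d. \<Sum>a'<d. (cmod (X a a' - X a' a))^2) + 4 * Re (\<Sum>a<d. \<Sum>a'<d. X a a' * cnj (X a' a))"
    by (simp add: cmod_add_sq cmod_diff_sq sum.distrib sum_subtractf sum_distrib_left Re_sum algebra_simps)
  moreover have "0 \<le> (\<Sum>a<d. \<Sum>a'<d. (cmod (X a a' + X a' a))^2)" by (intro sum_nonneg) simp
  ultimately show ?thesis by linarith
qed

lemma pure_D:
  fixes G V :: "nat \<Rightarrow> nat \<Rightarrow> complex"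
  shows "(\<Sum>a<d. \<Sum>a'<d. (cmod ((\<Sum>b<d. G a b * V a' b) - (\<Sum>b<d. G a' b * V a b)))^2)
     \<le> 2 * (\<Sum>a<d. \<Sum>b<d. (cmod (G a b))^2) * (\<Sum>a<d. \<Sum>b<d. (cmod (V a b))^2)"
proof -
  define A where "A = {..<d} \<times> {..<d}"
  define \<omega> where "\<omega> = (\<lambda>b (p::nat\<times>nat). G (fst p) b * V (snd p) b - G (snd p) b * V (fst p) b)"
  define xb where "xb = (\<lambda>b. sqrt (\<Sum>a<d. (cmod (G a b))^2))"
  define yb where "yb = (\<lambda>b. sqrt (\<Sum>a<d. (cmod (V a b))^2))"
  define D where "D = (\<Sum>a<d. \<Sum>a'<d. (cmod ((\<Sum>b<d. G a b * V a' b) - (\<Sum>b<d. G a' b * V a b)))^2)"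
  have D0: "0 \<le> D" unfolding D_def by (intro sum_nonneg) simp
  have "sqrt D = L2_set (\<lambda>p. cmod (\<Sum>b<d. \<omega> b p)) A"
    unfolding L2_set_def D_def A_def \<omega>_def
    by (subst sum.cartesian_product) (simp add: case_prod_beta sum_subtractf)
  also have "\<dots> \<le> (\<Sum>b<d. L2_set (\<lambda>p. cmod (\<omega> b p)) A)"
    by (rule minkowski) simp
  also have "\<dots> \<le> (\<Sum>b<d. sqrt 2 * (\<bar>xb b\<bar> * \<bar>yb b\<bar>))"
  proof (rule sum_mono)
    fix b
    have "(\<Sum>p\<in>A. (cmod (\<omega> b p))^2) \<le> 2 * (xb b)^2 * (yb b)^2"
      using wedge_bound[of "\<lambda>a. G a b" "\<lambda>a. V a b" d]
      unfolding A_def \<omega>_def xb_def yb_def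
      by (subst (asm) sum.cartesian_product) (simp add: case_prod_beta sum_nonneg)
    then have "L2_set (\<lambda>p. cmod (\<omega> b p)) A \<le> sqrt (2 * (xb b)^2 * (yb b)^2)"
      unfolding L2_set_def by (rule real_sqrt_le_mono)
    also have "\<dots> = sqrt 2 * (\<bar>xb b\<bar> * \<bar>yb b\<bar>)"
      by (simp add: real_sqrt_mult)
    finally show "L2_set (\<lambda>p. cmod (\<omega> b p)) A \<le> sqrt 2 * (\<bar>xb b\<bar> * \<bar>yb b\<bar>)" .
  qed
  also have "\<dots> = sqrt 2 * (\<Sum>b<d. \<bar>xb b\<bar> * \<bar>yb b\<bar>)" by (simp add: sum_distrib_left)
  also have "\<dots> \<le> sqrt 2 * (L2_set xb {..<d} * L2_set yb {..<d})"
    by (intro mult_left_mono L2_set_mult_ineq) simp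
  finally have le: "sqrt D \<le> sqrt 2 * (L2_set xb {..<d} * L2_set yb {..<d})" .
  have lx: "L2_set xb {..<d} = sqrt (\<Sum>a<d. \<Sum>b<d. (cmod (G a b))^2)"
  proof -
    have "L2_set xb {..<d} = sqrt (\<Sum>b<d. \<Sum>a<d. (cmod (G a b))^2)"
      unfolding L2_set_def xb_def by (simp add: sum_nonneg)
    also have "(\<Sum>b<d. \<Sum>a<d. (cmod (G a b))^2) = (\<Sum>a<d. \<Sum>b<d. (cmod (G a b))^2)"
      by (rule sum.swap)
    finally show ?thesis .
  qed
  have ly: "L2_set yb {..<d} = sqrt (\<Sum>a<d. \<Sum>b<d. (cmod (V a b))^2)"
  proof -
    have "L2_set yb {..<d} = sqrt (\<Sum>b<d. \<Sum>a<d. (cmod (V a b))^2)"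
      unfolding L2_set_def yb_def by (simp add: sum_nonneg)
    also have "(\<Sum>b<d. \<Sum>a<d. (cmod (V a b))^2) = (\<Sum>a<d. \<Sum>b<d. (cmod (V a b))^2)"
      by (rule sum.swap)
    finally show ?thesis .
  qed
  have "sqrt D \<le> sqrt (2 * (\<Sum>a<d. \<Sum>b<d. (cmod (G a b))^2) * (\<Sum>a<d. \<Sum>b<d. (cmod (V a b))^2))"
    using le unfolding lx ly by (simp add: real_sqrt_mult)
  then show ?thesis unfolding D_def[symmetric] by simp
qed

lemma pure_bound:
  fixes d :: nat and G V :: "nat \<Rightarrow> nat \<Rightarrow> complex"
  defines "X \<equiv> \<lambda>a a'. \<Sum>b<d. G a b * V a' b"
  shows "-(1/2) * (\<Sum>a<d. \<Sum>b<d. (cmod (G a b))^2) * (\<Sum>a<d. \<Sum>b<d. (cmod (V a b))^2)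
     \<le> Re (\<Sum>a<d. \<Sum>a'<d. X a a' * cnj (X a' a))"
  using pure_re_D[where d=d and X=X] pure_D[where d=d and G=G and V=V] unfolding X_def by linarith



definition pt :: "nat \<Rightarrow> (nat \<Rightarrow> nat \<Rightarrow> complex) \<Rightarrow> nat \<Rightarrow> nat \<Rightarrow> complex" where
  "pt d R i j = R ((i div d) * d + j mod d) ((j div d) * d + i mod d)"

lemma idx_lt: "(a::nat) < d \<Longrightarrow> b < d \<Longrightarrow> a * d + b < d * d"
proof -
  assume a: "a < d" and b: "b < d"
  have "a * d + b < a * d + d" using b by simp
  also have "\<dots> = (a + 1) * d" by simp
  also have "\<dots> \<le> d * d" using a by (intro mult_le_mono1) simp
  finally show ?thesis .
qed

lemma pt_idx_lt: "(i::nat) < d*d \<Longrightarrow> j < d*d \<Longrightarrow> (i div d) * d + j mod d < d*d"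
proof -
  assume i: "i < d*d" and j: "j < d*d"
  then have d: "0 < d" by (cases d) auto
  show ?thesis using i d by (intro idx_lt) (auto simp: less_mult_imp_div_less)
qed

lemma bf_cong_H: "(\<And>i j. i < n \<Longrightarrow> j < n \<Longrightarrow> H i j = H' i j) \<Longrightarrow> bf n H f g = bf n H' f g"
  unfolding bf_def by (intro sum.cong) auto

lemma bf_sum: "bf n (\<lambda>i j. \<Sum>k\<in>K. H k i j) f g = (\<Sum>k\<in>K. bf n (H k) f g)"
proof -
  have "bf n (\<lambda>i j. \<Sum>k\<in>K. H k i j) f g = (\<Sum>i<n. \<Sum>j<n. \<Sum>k\<in>K. cnj (f i) * H k i j * g j)"
    unfolding bf_def by (simp add: sum_distrib_left sum_distrib_right)
  also have "\<dots> = (\<Sum>i<n. \<Sum>k\<in>K. \<Sum>j<n. cnj (f i) * H k i j * g j)"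
    by (rule sum.cong[OF refl], rule sum.swap)
  also have "\<dots> = (\<Sum>k\<in>K. \<Sum>i<n. \<Sum>j<n. cnj (f i) * H k i j * g j)"
    by (rule sum.swap)
  finally show ?thesis unfolding bf_def .
qed

lemma qf_split:
  "bf (d*d) H f g = (\<Sum>a<d. \<Sum>b<d. \<Sum>a'<d. \<Sum>b'<d. cnj (f (a*d+b)) * H (a*d+b) (a'*d+b') * g (a'*d+b'))"
  unfolding bf_def by (simp only: sum_split)

lemma per_k:
  fixes d :: nat and u f :: "nat \<Rightarrow> complex"
  defines "X \<equiv> \<lambda>a a'. \<Sum>b<d. u (a*d+b) * f (a'*d+b)"
  shows "qf (d*d) (pt d (\<lambda>i j. u i * cnj (u j))) f = (\<Sum>a<d. \<Sum>a'<d. X a a' * cnj (X a' a))"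
proof -
  have "qf (d*d) (pt d (\<lambda>i j. u i * cnj (u j))) f
    = (\<Sum>a<d. \<Sum>b<d. \<Sum>a'<d. \<Sum>b'<d. cnj (f (a*d+b)) * (u (a*d+b') * cnj (u (a'*d+b))) * f (a'*d+b'))"
    unfolding qf_split
  proof (intro sum.cong refl)
    fix a b a' b' assume "a \<in> {..<d}" "b \<in> {..<d}" "a' \<in> {..<d}" "b' \<in> {..<d}"
    then have "b < d" "b' < d" by auto
    then show "cnj (f (a*d+b)) * pt d (\<lambda>i j. u i * cnj (u j)) (a*d+b) (a'*d+b') * f (a'*d+b')
       = cnj (f (a*d+b)) * (u (a*d+b') * cnj (u (a'*d+b))) * f (a'*d+b')"
      unfolding pt_def by simp
  qed
  also have "\<dots> = (\<Sum>a<d. \<Sum>a'<d. \<Sum>b<d. \<Sum>b'<d. cnj (f (a*d+b)) * (u (a*d+b') * cnj (u (a'*d+b))) * f (a'*d+b'))"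
    by (rule sum.cong[OF refl], rule sum.swap)
  also have "\<dots> = (\<Sum>a<d. \<Sum>a'<d. \<Sum>b'<d. \<Sum>b<d. cnj (f (a*d+b)) * (u (a*d+b') * cnj (u (a'*d+b))) * f (a'*d+b'))"
    by (rule sum.cong[OF refl], rule sum.cong[OF refl], rule sum.swap)
  also have "\<dots> = (\<Sum>a<d. \<Sum>a'<d. X a a' * cnj (X a' a))"
    unfolding X_def by (simp add: cnj_sum sum_product algebra_simps)
  finally show ?thesis .
qed

lemma sum_cmult3: "(\<Sum>k\<in>K. (c::real) * A k * N) = (c * N) * sum A K"
  by (simp add: sum_distrib_left mult.commute mult.left_commute)

lemma gamma_bound:
  fixes R :: "nat \<Rightarrow> nat \<Rightarrow> complex" and d :: nat
  assumes herm: "\<forall>i<d*d. \<forall>j<d*d. R j i = cnj (R i j)"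
    and pos: "\<forall>f. 0 \<le> Re (qf (d*d) R f)"
    and tr: "(\<Sum>i<d*d. R i i) = 1"
  shows "Im (qf (d*d) (pt d R) f) = 0"
    "-(1/2) * (\<Sum>i<d*d. (cmod (f i))^2) \<le> Re (qf (d*d) (pt d R) f)"
proof -
  obtain g where g: "\<forall>i<d*d. \<forall>j<d*d. R i j = (\<Sum>k<d*d. g k i * cnj (g k j))"
    using chol[OF herm pos] by blast
  define X where "X = (\<lambda>k a a'. \<Sum>b<d. g k (a*d+b) * f (a'*d+b))"
  have eq: "qf (d*d) (pt d R) f = (\<Sum>k<d*d. \<Sum>a<d. \<Sum>a'<d. X k a a' * cnj (X k a' a))"
  proof -
    have "qf (d*d) (pt d R) f = qf (d*d) (\<lambda>i j. \<Sum>k<d*d. pt d (\<lambda>i j. g k i * cnj (g k j)) i j) f"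
    proof (rule bf_cong_H)
      fix i j assume i: "i < d*d" and j: "j < d*d"
      have l: "(i div d)*d + j mod d < d*d" "(j div d)*d + i mod d < d*d"
        using pt_idx_lt i j by auto
      show "pt d R i j = (\<Sum>k<d*d. pt d (\<lambda>i j. g k i * cnj (g k j)) i j)"
        unfolding pt_def using g l by simp
    qed
    also have "\<dots> = (\<Sum>k<d*d. qf (d*d) (pt d (\<lambda>i j. g k i * cnj (g k j))) f)"
      by (rule bf_sum)
    also have "\<dots> = (\<Sum>k<d*d. \<Sum>a<d. \<Sum>a'<d. X k a a' * cnj (X k a' a))"
      unfolding X_def by (rule sum.cong[OF refl], rule per_k)
    finally show ?thesis .
  qed
  show "Im (qf (d*d) (pt d R) f) = 0"
    unfolding eq using pure_im by (simp add: Im_sum)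
  have NG: "(\<Sum>k<d*d. \<Sum>a<d. \<Sum>b<d. (cmod (g k (a*d+b)))^2) = 1"
  proof -
    have "(\<Sum>k<d*d. \<Sum>a<d. \<Sum>b<d. (cmod (g k (a*d+b)))^2) = (\<Sum>k<d*d. \<Sum>i<d*d. (cmod (g k i))^2)"
      by (simp only: sum_split)
    also have "\<dots> = (\<Sum>i<d*d. \<Sum>k<d*d. (cmod (g k i))^2)" by (rule sum.swap)
    also have "\<dots> = (\<Sum>i<d*d. Re (R i i))"
    proof (rule sum.cong[OF refl])
      fix i assume "i \<in> {..<d*d}"
      then have "R i i = (\<Sum>k<d*d. g k i * cnj (g k i))" using g by simp
      then show "(\<Sum>k<d*d. (cmod (g k i))^2) = Re (R i i)" by (simp only: Re_sum norm_sq_re)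
    qed
    also have "\<dots> = 1" using tr by (simp flip: Re_sum)
    finally show ?thesis .
  qed
  have NV: "(\<Sum>a<d. \<Sum>b<d. (cmod (f (a*d+b)))^2) = (\<Sum>i<d*d. (cmod (f i))^2)"
    by (simp only: sum_split)
  have "(\<Sum>k<d*d. -(1/2) * (\<Sum>a<d. \<Sum>b<d. (cmod (g k (a*d+b)))^2) * (\<Sum>a<d. \<Sum>b<d. (cmod (f (a*d+b)))^2))
     \<le> (\<Sum>k<d*d. Re (\<Sum>a<d. \<Sum>a'<d. X k a a' * cnj (X k a' a)))"
    unfolding X_def by (rule sum_mono) (rule pure_bound)
  also have "\<dots> = Re (qf (d*d) (pt d R) f)" unfolding eq by (simp add: Re_sum)
  finally have fin: "(\<Sum>k<d*d. -(1/2) * (\<Sum>a<d. \<Sum>b<d. (cmod (g k (a*d+b)))^2) * (\<Sum>i<d*d. (cmod (f i))^2))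
     \<le> Re (qf (d*d) (pt d R) f)" unfolding NV .
  have "(\<Sum>k<d*d. -(1/2) * (\<Sum>a<d. \<Sum>b<d. (cmod (g k (a*d+b)))^2) * (\<Sum>i<d*d. (cmod (f i))^2))
     = (-(1/2) * (\<Sum>i<d*d. (cmod (f i))^2)) * (\<Sum>k<d*d. \<Sum>a<d. \<Sum>b<d. (cmod (g k (a*d+b)))^2)"
    by (rule sum_cmult3)
  then show "-(1/2) * (\<Sum>i<d*d. (cmod (f i))^2) \<le> Re (qf (d*d) (pt d R) f)"
    using fin NG by simp
qed



lemma dim_PA[simp]: "dim_row (P_antisym d) = d*d" "dim_col (P_antisym d) = d*d"
  using PA_carrier[of d] by auto
lemma dim_PS[simp]: "dim_row (P_sym d) = d*d" "dim_col (P_sym d) = d*d"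
  using PS_carrier[of d] by auto

lemma PA_mult_entry:
  assumes X: "X \<in> carrier_mat (d*d) (d*d)" and i: "i < d*d" and j: "j < d*d"
  shows "(P_antisym d * X) $$ (i,j) = (X $$ (i,j) - X $$ (sw d i, j))/2"
  using mult_entry[OF PA_carrier X i j] PA_left[OF i, of "\<lambda>k. X $$ (k,j)"] by simp

lemma sand:
  assumes X: "X \<in> carrier_mat (d*d) (d*d)" and i: "i < d*d" and j: "j < d*d"
  shows "(P_antisym d * X * P_antisym d) $$ (i,j)
     = (X $$ (i,j) - X $$ (sw d i, j) - X $$ (i, sw d j) + X $$ (sw d i, sw d j))/4"
proof -
  have PX: "P_antisym d * X \<in> carrier_mat (d*d) (d*d)" using X PA_carrier by auto
  have "(P_antisym d * X * P_antisym d) $$ (i,j) = ((P_antisym d * X) $$ (i,j) - (P_antisym d * X) $$ (i, sw d j))/2"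
    using mult_entry[OF PX PA_carrier i j] PA_right[OF j, of "\<lambda>k. (P_antisym d * X) $$ (i,k)"] by simp
  also have "\<dots> = (X $$ (i,j) - X $$ (sw d i, j) - X $$ (i, sw d j) + X $$ (sw d i, sw d j))/4"
    unfolding PA_mult_entry[OF X i j] PA_mult_entry[OF X i sw_lt[OF j]] by (simp add: field_simps)
  finally show ?thesis .
qed

lemma PS_left: assumes "i < d*d"
  shows "(\<Sum>k<d*d. P_sym d $$ (i,k) * F k) = (F i + F (sw d i))/2"
proof -
  have "(\<Sum>k<d*d. P_sym d $$ (i,k) * F k) =
     (\<Sum>k<d*d. (if i = k then F k/2 else 0)) + (\<Sum>k<d*d. (if k = sw d i then F k/2 else 0))"
    unfolding sum.distrib[symmetric]
  proof (rule sum.cong[OF refl])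
    fix k assume "k \<in> {..<d*d}"
    then have k: "k < d*d" by simp
    have e: "(i = sw d k) = (k = sw d i)" by (rule sw_eq[OF assms k])
    show "P_sym d $$ (i,k) * F k = (if i = k then F k/2 else 0) + (if k = sw d i then F k/2 else 0)"
      using assms k by (simp add: PS_entry e)
  qed
  also have "\<dots> = (F i + F (sw d i))/2" using assms sw_lt[OF assms] by (simp add: add_divide_distrib)
  finally show ?thesis .
qed

lemma PS_sw1: assumes "x < d*d" "y < d*d" shows "P_sym d $$ (sw d x, y) = P_sym d $$ (x, y)"
proof -
  have "(sw d x = y) = (x = sw d y)" using sw_eq assms by metis
  moreover have "(sw d x = sw d y) = (x = y)" using sw_sw assms by metis
  ultimately show ?thesis using assms sw_lt by (simp add: PS_entry)
qed
lemma PS_sw2: assumes "x < d*d" "y < d*d" shows "P_sym d $$ (x, sw d y) = P_sym d $$ (x, y)"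
proof -
  have "(x = sw d (sw d y)) = (x = y)" using sw_sw assms by metis
  moreover have "(x = sw d y) = (sw d x = y)" using sw_eq assms by metis
  ultimately show ?thesis using assms sw_lt by (simp add: PS_entry)
qed

lemma sum_sw: "(\<Sum>i<d*d. F (sw d i)) = (\<Sum>i<d*d. F i)"
  by (rule sum.reindex_bij_witness[of _ "sw d" "sw d"]) (auto simp: sw_sw sw_lt)



lemma pt_entry: "i < d*d \<Longrightarrow> j < d*d \<Longrightarrow>
  partial_transpose d \<sigma> $$ (i,j) = \<sigma> $$ ((i div d) * d + j mod d, (j div d) * d + i mod d)"
  unfolding partial_transpose_def by simp

lemma pt_carrier: "partial_transpose d \<sigma> \<in> carrier_mat (d*d) (d*d)"
  unfolding partial_transpose_def by simp

lemma mtrace_carrier: "A \<in> carrier_mat n n \<Longrightarrow> mtrace A = (\<Sum>i<n. A $$ (i,i))"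
  unfolding mtrace_def by simp

lemma trace_PA:
  assumes X: "X \<in> carrier_mat (d*d) (d*d)"
  shows "mtrace (P_antisym d * X) = (\<Sum>i<d*d. X $$ (i,i))/2 - (\<Sum>i<d*d. X $$ (sw d i, i))/2"
proof -
  have "mtrace (P_antisym d * X) = (\<Sum>i<d*d. (X $$ (i,i) - X $$ (sw d i, i))/2)"
    unfolding mtrace_def
  proof (simp, intro sum.cong refl)
    fix i assume "i \<in> {..<d*d}"
    then show "(P_antisym d * X) $$ (i,i) = (X $$ (i,i) - X $$ (sw d i, i))/2"
      using PA_mult_entry[OF X] by simp
  qed
  then show ?thesis by (simp add: sum_subtractf sum_divide_distrib diff_divide_distrib)
qed

lemma delta4: "(\<Sum>a<(d::nat). \<Sum>b<d. \<Sum>a'<d. \<Sum>b'<d. (if b = a then (if b' = a' then F a a' else 0) else (0::'a::comm_monoid_add)))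
   = (\<Sum>a<d. \<Sum>a'<d. F a a')"
proof (rule sum.cong[OF refl])
  fix a assume a: "a \<in> {..<d}"
  have "(\<Sum>b<d. \<Sum>a'<d. \<Sum>b'<d. (if b = a then (if b' = a' then F a a' else 0) else (0::'a)))
     = (\<Sum>b<d. if b = a then (\<Sum>a'<d. F a a') else 0)"
  proof (rule sum.cong[OF refl])
    fix b assume "b \<in> {..<d}"
    show "(\<Sum>a'<d. \<Sum>b'<d. (if b = a then (if b' = a' then F a a' else 0) else (0::'a)))
       = (if b = a then (\<Sum>a'<d. F a a') else 0)"
    proof (cases "b = a")
      case True
      then show ?thesis by simp
    qed simp
  qed
  then show "(\<Sum>b<d. \<Sum>a'<d. \<Sum>b'<d. (if b = a then (if b' = a' then F a a' else 0) else (0::'a)))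
     = (\<Sum>a'<d. F a a')" using a by simp
qed

lemma upper:
  assumes "ppt_feasible d \<rho> \<sigma>"
  shows "Re (mtrace (P_antisym d * \<sigma>)) \<le> 1/2"
proof -
  have ps: "psd (d*d) \<sigma>" and t1: "mtrace \<sigma> = 1" and pg: "psd (d*d) (partial_transpose d \<sigma>)"
    using assms unfolding ppt_feasible_def by auto
  have X: "\<sigma> \<in> carrier_mat (d*d) (d*d)" using ps unfolding psd_def by simp
  define \<phi> :: "nat \<Rightarrow> complex" where "\<phi> = (\<lambda>i. if i div d = i mod d then 1 else 0)"
  define S where "S = (\<Sum>i<d*d. \<sigma> $$ (sw d i, i))"
  have S: "S = (\<Sum>a<d. \<Sum>b<d. \<sigma> $$ (b*d+a, a*d+b))"
    unfolding S_def by (simp only: sum_split) (intro sum.cong refl, simp add: sw_ab)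
  have Q: "qf (d*d) (\<lambda>i j. partial_transpose d \<sigma> $$ (i,j)) \<phi> = (\<Sum>a<d. \<Sum>a'<d. \<sigma> $$ (a*d+a', a'*d+a))"
  proof -
    have "qf (d*d) (\<lambda>i j. partial_transpose d \<sigma> $$ (i,j)) \<phi>
       = (\<Sum>a<d. \<Sum>b<d. \<Sum>a'<d. \<Sum>b'<d. (if b = a then (if b' = a' then \<sigma> $$ (a*d+a', a'*d+a) else 0) else 0))"
      unfolding qf_split
    proof (intro sum.cong refl)
      fix a b a' b' assume "a \<in> {..<d}" "b \<in> {..<d}" "a' \<in> {..<d}" "b' \<in> {..<d}"
      then have a: "a < d" and b: "b < d" and a': "a' < d" and b': "b' < d" by auto
      show "cnj (\<phi> (a*d+b)) * partial_transpose d \<sigma> $$ (a*d+b, a'*d+b') * \<phi> (a'*d+b')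
        = (if b = a then (if b' = a' then \<sigma> $$ (a*d+a', a'*d+a) else 0) else 0)"
        unfolding \<phi>_def using a b a' b' idx_lt[OF a b] idx_lt[OF a' b'] by (auto simp: pt_entry)
    qed
    also have "\<dots> = (\<Sum>a<d. \<Sum>a'<d. \<sigma> $$ (a*d+a', a'*d+a))" by (rule delta4)
    finally show ?thesis .
  qed
  have "S = (\<Sum>b<d. \<Sum>a<d. \<sigma> $$ (b*d+a, a*d+b))" unfolding S by (rule sum.swap)
  then have SQ: "S = qf (d*d) (\<lambda>i j. partial_transpose d \<sigma> $$ (i,j)) \<phi>" unfolding Q by simp
  have "0 \<le> Re S" unfolding SQ using psd_qf[OF pg] by simp
  moreover have "mtrace (P_antisym d * \<sigma>) = 1/2 - S/2"
    unfolding trace_PA[OF X] S_def using t1 mtrace_carrier[OF X] by simp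
  ultimately show ?thesis by simp
qed



lemma antisym_entries:
  assumes X: "\<rho> \<in> carrier_mat (d*d) (d*d)" and as: "\<rho> = P_antisym d * \<rho> * P_antisym d"
    and i: "i < d*d" and j: "j < d*d"
  shows "\<rho> $$ (sw d i, j) = - \<rho> $$ (i,j)" "\<rho> $$ (i, sw d j) = - \<rho> $$ (i,j)"
proof -
  have si: "sw d i < d*d" and sj: "sw d j < d*d" using sw_lt i j by auto
  have e1: "\<rho> $$ (i,j) = (\<rho> $$ (i,j) - \<rho> $$ (sw d i, j) - \<rho> $$ (i, sw d j) + \<rho> $$ (sw d i, sw d j))/4"
    using sand[OF X i j] as by simp
  have e2: "\<rho> $$ (sw d i,j) = (\<rho> $$ (sw d i,j) - \<rho> $$ (i, j) - \<rho> $$ (sw d i, sw d j) + \<rho> $$ (i, sw d j))/4"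
    using sand[OF X si j] as sw_sw[OF i] by simp
  have e3: "\<rho> $$ (i,sw d j) = (\<rho> $$ (i,sw d j) - \<rho> $$ (sw d i, sw d j) - \<rho> $$ (i, j) + \<rho> $$ (sw d i, j))/4"
    using sand[OF X i sj] as sw_sw[OF j] by simp
  have "\<rho> $$ (i,j) + \<rho> $$ (sw d i,j) = 0"
    using arg_cong2[OF e1 e2, of "(+)"] by (simp add: field_simps)
  then show "\<rho> $$ (sw d i, j) = - \<rho> $$ (i,j)" by (simp add: add_eq_0_iff)
  have "\<rho> $$ (i,j) + \<rho> $$ (i, sw d j) = 0"
    using arg_cong2[OF e1 e3, of "(+)"] by (simp add: field_simps)
  then show "\<rho> $$ (i, sw d j) = - \<rho> $$ (i,j)" by (simp add: add_eq_0_iff)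
qed

lemma delta4b: "(\<Sum>a<(d::nat). \<Sum>b<d. \<Sum>a'<d. \<Sum>b'<d. (if a' = a then (if b' = b then F a b else 0) else (0::'a::comm_monoid_add)))
   = (\<Sum>a<d. \<Sum>b<d. F a b)"
proof (intro sum.cong refl)
  fix a b assume a: "a \<in> {..<d}" and b: "b \<in> {..<d}"
  have "(\<Sum>a'<d. \<Sum>b'<d. (if a' = a then (if b' = b then F a b else 0) else (0::'a)))
     = (\<Sum>a'<d. if a' = a then F a b else 0)"
    using b by (intro sum.cong refl) simp
  then show "(\<Sum>a'<d. \<Sum>b'<d. (if a' = a then (if b' = b then F a b else 0) else (0::'a))) = F a b"
    using a by simp
qed

lemma bf_lin: "bf n (\<lambda>i j. c * (H i j + K i j)) f g = c * (bf n H f g + bf n K f g)"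
  unfolding bf_def by (simp add: algebra_simps sum.distrib sum_distrib_left)

lemma qf_PS:
  "Im (qf (d*d) (\<lambda>i j. P_sym d $$ (i,j)) f) = 0 \<and> 0 \<le> Re (qf (d*d) (\<lambda>i j. P_sym d $$ (i,j)) f)"
proof -
  define W where "W = (\<Sum>i<d*d. cnj (f i) * f (sw d i))"
  have q: "qf (d*d) (\<lambda>i j. P_sym d $$ (i,j)) f = ((\<Sum>i<d*d. cnj (f i) * f i) + W)/2"
  proof -
    have "qf (d*d) (\<lambda>i j. P_sym d $$ (i,j)) f = (\<Sum>i<d*d. cnj (f i) * ((f i + f (sw d i))/2))"
      unfolding bf_def
    proof (intro sum.cong refl)
      fix i assume "i \<in> {..<d*d}"
      then have i: "i < d*d" by simp
      have "(\<Sum>j<d*d. cnj (f i) * P_sym d $$ (i, j) * f j) = cnj (f i) * (\<Sum>j<d*d. P_sym d $$ (i, j) * f j)"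
        by (simp add: sum_distrib_left mult.assoc)
      then show "(\<Sum>j<d*d. cnj (f i) * P_sym d $$ (i, j) * f j) = cnj (f i) * ((f i + f (sw d i))/2)"
        using PS_left[OF i, of f] by simp
    qed
    also have "\<dots> = (\<Sum>i<d*d. (cnj (f i) * f i + cnj (f i) * f (sw d i))/2)"
      by (intro sum.cong refl) (simp add: distrib_left add_divide_distrib)
    also have "\<dots> = (\<Sum>i<d*d. cnj (f i) * f i + cnj (f i) * f (sw d i))/2"
      by (rule sum_divide_distrib[symmetric])
    also have "\<dots> = ((\<Sum>i<d*d. cnj (f i) * f i) + W)/2"
      unfolding W_def by (simp only: sum.distrib)
    finally show ?thesis .
  qed
  have cW: "cnj W = W"
  proof -
    have "cnj W = (\<Sum>i<d*d. f i * cnj (f (sw d i)))" unfolding W_def by (simp add: cnj_sum)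
    also have "\<dots> = (\<Sum>i<d*d. f (sw d i) * cnj (f (sw d (sw d i))))" by (rule sum_sw[symmetric])
    also have "\<dots> = W" unfolding W_def by (intro sum.cong refl) (simp add: sw_sw mult.commute)
    finally show ?thesis .
  qed
  have ImW: "Im W = 0" using cW by (simp add: complex_eq_iff)
  have ReW: "- (\<Sum>i<d*d. (cmod (f i))^2) \<le> Re W"
  proof -
    have "(\<Sum>i<d*d. -((cmod (f i))^2 + (cmod (f (sw d i)))^2)/2) \<le> (\<Sum>i<d*d. Re (cnj (f i) * f (sw d i)))"
    proof (rule sum_mono)
      fix i
      have "0 \<le> (cmod (f (sw d i) + f i))^2" by simp
      then show "-((cmod (f i))^2 + (cmod (f (sw d i)))^2)/2 \<le> Re (cnj (f i) * f (sw d i))"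
        unfolding cmod_add_sq by (simp add: mult.commute)
    qed
    moreover have "(\<Sum>i<d*d. -((cmod (f i))^2 + (cmod (f (sw d i)))^2)/2) = - (\<Sum>i<d*d. (cmod (f i))^2)"
    proof -
      have "(\<Sum>i<d*d. -((cmod (f i))^2 + (cmod (f (sw d i)))^2)/2)
         = -((\<Sum>i<d*d. (cmod (f i))^2) + (\<Sum>i<d*d. (cmod (f (sw d i)))^2))/2"
        by (simp only: sum_divide_distrib[symmetric] sum_negf sum.distrib)
      then show ?thesis using sum_sw[of "\<lambda>i. (cmod (f i))^2" d] by simp
    qed
    ultimately show ?thesis unfolding W_def by (simp add: Re_sum)
  qed
  have R1: "Re (\<Sum>i<d*d. cnj (f i) * f i) = (\<Sum>i<d*d. (cmod (f i))^2)"
    by (simp add: Re_sum norm_sq_re[symmetric] mult.commute)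
  have I1: "Im (\<Sum>i<d*d. cnj (f i) * f i) = 0"
    by (simp add: Im_sum)
  show ?thesis unfolding q using R1 I1 ImW ReW by simp
qed



lemma qf_ptPS:
  "Im (qf (d*d) (pt d (\<lambda>i j. P_sym d $$ (i,j))) f) = 0 \<and>
   (1/2) * (\<Sum>i<d*d. (cmod (f i))^2) \<le> Re (qf (d*d) (pt d (\<lambda>i j. P_sym d $$ (i,j))) f)"
proof -
  define F where "F = (\<lambda>a b. f (a*d+b))"
  define s where "s = (\<Sum>a<d. F a a)"
  have "qf (d*d) (pt d (\<lambda>i j. P_sym d $$ (i,j))) f =
     (\<Sum>a<d. \<Sum>b<d. \<Sum>a'<d. \<Sum>b'<d.
        (if a' = a then (if b' = b then cnj (F a b) * F a b / 2 else 0) else 0)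
      + (if b = a then (if b' = a' then cnj (F a a) * F a' a' / 2 else 0) else 0))"
    unfolding qf_split
  proof (intro sum.cong refl)
    fix a b a' b' assume "a \<in> {..<d}" "b \<in> {..<d}" "a' \<in> {..<d}" "b' \<in> {..<d}"
    then have a: "a < d" and b: "b < d" and a': "a' < d" and b': "b' < d" by auto
    have l1: "a*d+b' < d*d" "a'*d+b < d*d" using idx_lt a b a' b' by auto
    have s1: "sw d (a'*d+b) = b*d+a'" using sw_ab[OF b] .
    have e1: "(a*d+b' = a'*d+b) = (a = a' \<and> b' = b)" using idx_eq[OF b' b] .
    have e2: "(a*d+b' = b*d+a') = (a = b \<and> b' = a')" using idx_eq[OF b' a'] .
    have "pt d (\<lambda>i j. P_sym d $$ (i,j)) (a*d+b) (a'*d+b') = P_sym d $$ (a*d+b', a'*d+b)"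
      unfolding pt_def using b b' by simp
    also have "\<dots> = (if a = a' \<and> b' = b then 1/2 else 0) + (if a = b \<and> b' = a' then 1/2 else 0)"
      using l1 by (simp add: PS_entry s1 e1 e2)
    finally have pe: "pt d (\<lambda>i j. P_sym d $$ (i,j)) (a*d+b) (a'*d+b') =
      (if a = a' \<and> b' = b then 1/2 else 0) + (if a = b \<and> b' = a' then 1/2 else 0)" .
    show "cnj (f (a*d+b)) * pt d (\<lambda>i j. P_sym d $$ (i,j)) (a*d+b) (a'*d+b') * f (a'*d+b') =
        (if a' = a then (if b' = b then cnj (F a b) * F a b / 2 else 0) else 0)
      + (if b = a then (if b' = a' then cnj (F a a) * F a' a' / 2 else 0) else 0)"
      unfolding pe F_def by (auto simp: algebra_simps)
  qed
  also have "\<dots> = (\<Sum>a<d. \<Sum>b<d. cnj (F a b) * F a b / 2) + (\<Sum>a<d. \<Sum>a'<d. cnj (F a a) * F a' a' / 2)"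
    by (simp only: sum.distrib delta4 delta4b)
  also have "(\<Sum>a<d. \<Sum>a'<d. cnj (F a a) * F a' a' / 2) = cnj s * s / 2"
    unfolding s_def by (simp add: sum_product cnj_sum sum_divide_distrib)
  finally have q: "qf (d*d) (pt d (\<lambda>i j. P_sym d $$ (i,j))) f = (\<Sum>a<d. \<Sum>b<d. cnj (F a b) * F a b / 2) + cnj s * s / 2" .
  have r1: "Re (\<Sum>a<d. \<Sum>b<d. cnj (F a b) * F a b / 2) = (1/2) * (\<Sum>i<d*d. (cmod (f i))^2)"
  proof -
    have "Re (\<Sum>a<d. \<Sum>b<d. cnj (F a b) * F a b / 2) = (\<Sum>a<d. \<Sum>b<d. (cmod (F a b))^2 / 2)"
      by (simp add: Re_sum norm_sq_re[symmetric] mult.commute)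
    also have "\<dots> = (1/2) * (\<Sum>a<d. \<Sum>b<d. (cmod (F a b))^2)"
      by (simp add: sum_divide_distrib)
    also have "(\<Sum>a<d. \<Sum>b<d. (cmod (F a b))^2) = (\<Sum>i<d*d. (cmod (f i))^2)"
      unfolding F_def by (simp only: sum_split)
    finally show ?thesis .
  qed
  have i1: "Im (\<Sum>a<d. \<Sum>b<d. cnj (F a b) * F a b / 2) = 0" by (simp add: Im_sum)
  have r2: "0 \<le> Re (cnj s * s / 2)" using norm_sq_re[of s] by (simp add: mult.commute)
  have i2: "Im (cnj s * s / 2) = 0" by simp
  show ?thesis unfolding q using r1 i1 r2 i2 by simp
qed



lemma trace_PS: "(\<Sum>i<d*d. P_sym d $$ (i,i)) = (of_nat (d*d) + of_nat d) / 2"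
proof -
  have "(\<Sum>i<d*d. P_sym d $$ (i,i)) = (\<Sum>i<d*d. 1/2 + (if i = sw d i then 1/2 else 0))"
    by (intro sum.cong refl) (simp add: PS_entry)
  also have "\<dots> = of_nat (d*d) / 2 + (\<Sum>i<d*d. (if i = sw d i then 1/2 else 0))"
    by (simp add: sum.distrib)
  also have "(\<Sum>i<d*d. (if i = sw d i then 1/2 else 0)) = (\<Sum>a<d. \<Sum>b<d. (if b = a then 1/2 else (0::complex)))"
    unfolding sum_split
  proof (intro sum.cong refl)
    fix a b assume "a \<in> {..<d}" "b \<in> {..<d}"
    then have a: "a < d" and b: "b < d" by auto
    have "(a*d+b = sw d (a*d+b)) = (b = a)" unfolding sw_ab[OF b] using idx_eq[OF b a] by auto
    then show "(if a*d+b = sw d (a*d+b) then 1/2 else (0::complex)) = (if b = a then 1/2 else 0)" by simp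
  qed
  also have "\<dots> = of_nat d / 2" by simp
  finally show ?thesis by (simp add: add_divide_distrib)
qed

lemma lower_feasible:
  assumes st: "is_state (d*d) \<rho>" and as: "\<rho> = P_antisym d * \<rho> * P_antisym d"
  defines "p \<equiv> 2 / (real d * (real d + 1) + 2)"
  shows "ppt_feasible d \<rho> (complex_of_real p \<cdot>\<^sub>m (\<rho> + P_sym d))
     \<and> Re (mtrace (P_antisym d * (complex_of_real p \<cdot>\<^sub>m (\<rho> + P_sym d)))) = p"
proof -
  let ?n = "d*d"
  have psr: "psd ?n \<rho>" and tr1: "mtrace \<rho> = 1" using st unfolding is_state_def by auto
  have X: "\<rho> \<in> carrier_mat ?n ?n" using psr unfolding psd_def by simp
  define R where "R = (\<lambda>i j. \<rho> $$ (i,j))"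
  have trR: "(\<Sum>i<?n. R i i) = 1" using tr1 mtrace_carrier[OF X] unfolding R_def by simp
  have pq: "\<And>f. Im (qf ?n R f) = 0 \<and> 0 \<le> Re (qf ?n R f)" unfolding R_def using psd_qf[OF psr] by blast
  have herm: "\<forall>i<?n. \<forall>j<?n. R j i = cnj (R i j)"
    using herm_from_qf[of ?n R] pq by blast
  have pos: "\<forall>f. 0 \<le> Re (qf ?n R f)" using pq by blast
  have "0 \<le> real d * (real d + 1)" by simp
  then have "0 < real d * (real d + 1) + 2" by linarith
  then have p0: "0 < p" unfolding p_def by simp
  define c where "c = complex_of_real p"
  define \<sigma> where "\<sigma> = c \<cdot>\<^sub>m (\<rho> + P_sym d)"
  have S0: "\<sigma> \<in> carrier_mat ?n ?n" unfolding \<sigma>_def using X PS_carrier[of d] by simp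
  have ent: "\<And>i j. i < ?n \<Longrightarrow> j < ?n \<Longrightarrow> \<sigma> $$ (i,j) = c * (\<rho> $$ (i,j) + P_sym d $$ (i,j))"
    unfolding \<sigma>_def using X PS_carrier[of d] by simp
  note anti = antisym_entries[OF X as]
  have tPA: "mtrace (P_antisym d * \<sigma>) = c"
  proof -
    have "mtrace (P_antisym d * \<sigma>) = (\<Sum>i<?n. (\<sigma> $$ (i,i) - \<sigma> $$ (sw d i, i))/2)"
      unfolding trace_PA[OF S0] by (simp add: sum_subtractf sum_divide_distrib diff_divide_distrib)
    also have "\<dots> = (\<Sum>i<?n. c * \<rho> $$ (i,i))"
    proof (intro sum.cong refl)
      fix i assume "i \<in> {..<?n}"
      then have i: "i < ?n" by simp
      show "(\<sigma> $$ (i,i) - \<sigma> $$ (sw d i, i))/2 = c * \<rho> $$ (i,i)"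
        using ent[OF i i] ent[OF sw_lt[OF i] i] anti(1)[OF i i] PS_sw1[OF i i]
        by (simp add: field_simps)
    qed
    also have "\<dots> = c" using trR unfolding R_def by (simp flip: sum_distrib_left)
    finally show ?thesis .
  qed
  have eqc: "P_antisym d * \<sigma> * P_antisym d = mtrace (P_antisym d * \<sigma>) \<cdot>\<^sub>m \<rho>"
  proof (rule eq_matI)
    fix i j assume "i < dim_row (mtrace (P_antisym d * \<sigma>) \<cdot>\<^sub>m \<rho>)" "j < dim_col (mtrace (P_antisym d * \<sigma>) \<cdot>\<^sub>m \<rho>)"
    then have i: "i < ?n" and j: "j < ?n" using X by auto
    have si: "sw d i < ?n" and sj: "sw d j < ?n" using sw_lt i j by auto
    have a3: "\<rho> $$ (sw d i, sw d j) = \<rho> $$ (i,j)" using anti(1)[OF i sj] anti(2)[OF i j] by simp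
    have p3: "P_sym d $$ (sw d i, sw d j) = P_sym d $$ (i,j)" using PS_sw1[OF i sj] PS_sw2[OF i j] by simp
    show "(P_antisym d * \<sigma> * P_antisym d) $$ (i,j) = (mtrace (P_antisym d * \<sigma>) \<cdot>\<^sub>m \<rho>) $$ (i,j)"
      unfolding sand[OF S0 i j] tPA using X i j
      by (simp add: ent[OF i j] ent[OF si j] ent[OF i sj] ent[OF si sj] anti[OF i j] a3 p3
          PS_sw1[OF i j] PS_sw2[OF i j] field_simps)
  qed (use X in auto)
  have tr: "mtrace \<sigma> = 1"
  proof -
    have "mtrace \<sigma> = (\<Sum>i<?n. c * (\<rho> $$ (i,i) + P_sym d $$ (i,i)))"
      unfolding mtrace_carrier[OF S0] by (intro sum.cong refl) (simp add: ent)
    also have "\<dots> = c * (1 + (of_nat (d*d) + of_nat d) / 2)"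
      using trR unfolding R_def by (simp add: sum_distrib_left[symmetric] sum.distrib trace_PS)
    also have "\<dots> = complex_of_real (p * (1 + (real d * real d + real d) / 2))"
      unfolding c_def by simp
    also have "p * (1 + (real d * real d + real d) / 2) = 1"
      unfolding p_def using \<open>0 < real d * (real d + 1) + 2\<close> by (simp add: field_simps)
    finally show ?thesis by simp
  qed
  have psd\<sigma>: "psd ?n \<sigma>"
  proof (rule qf_psd[OF S0])
    fix f
    have "qf ?n (\<lambda>i j. \<sigma> $$ (i,j)) f = qf ?n (\<lambda>i j. c * (R i j + P_sym d $$ (i,j))) f"
      by (rule bf_cong_H) (simp add: ent R_def)
    also have "\<dots> = c * (qf ?n R f + qf ?n (\<lambda>i j. P_sym d $$ (i,j)) f)" by (rule bf_lin)
    finally have e: "qf ?n (\<lambda>i j. \<sigma> $$ (i,j)) f = c * (qf ?n R f + qf ?n (\<lambda>i j. P_sym d $$ (i,j)) f)" .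
    show "Im (qf ?n (\<lambda>i j. \<sigma> $$ (i,j)) f) = 0 \<and> 0 \<le> Re (qf ?n (\<lambda>i j. \<sigma> $$ (i,j)) f)"
      unfolding e c_def using pq[of f] qf_PS[of d f] p0 by simp
  qed
  have psdG: "psd ?n (partial_transpose d \<sigma>)"
  proof (rule qf_psd[OF pt_carrier])
    fix f
    have "qf ?n (\<lambda>i j. partial_transpose d \<sigma> $$ (i,j)) f
        = qf ?n (\<lambda>i j. c * (pt d R i j + pt d (\<lambda>i j. P_sym d $$ (i,j)) i j)) f"
    proof (rule bf_cong_H)
      fix i j assume i: "i < ?n" and j: "j < ?n"
      have l: "(i div d)*d + j mod d < ?n" "(j div d)*d + i mod d < ?n"
        using pt_idx_lt i j by auto
      show "partial_transpose d \<sigma> $$ (i,j) = c * (pt d R i j + pt d (\<lambda>i j. P_sym d $$ (i,j)) i j)"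
        unfolding pt_entry[OF i j] ent[OF l] pt_def R_def ..
    qed
    also have "\<dots> = c * (qf ?n (pt d R) f + qf ?n (pt d (\<lambda>i j. P_sym d $$ (i,j))) f)" by (rule bf_lin)
    finally have e: "qf ?n (\<lambda>i j. partial_transpose d \<sigma> $$ (i,j)) f
        = c * (qf ?n (pt d R) f + qf ?n (pt d (\<lambda>i j. P_sym d $$ (i,j))) f)" .
    have g1: "Im (qf ?n (pt d R) f) = 0" "-(1/2) * (\<Sum>i<?n. (cmod (f i))^2) \<le> Re (qf ?n (pt d R) f)"
      using gamma_bound[OF herm pos trR] by auto
    show "Im (qf ?n (\<lambda>i j. partial_transpose d \<sigma> $$ (i,j)) f) = 0 \<and> 0 \<le> Re (qf ?n (\<lambda>i j. partial_transpose d \<sigma> $$ (i,j)) f)"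
      unfolding e c_def using g1 qf_ptPS[of d f] p0 by simp
  qed
  have "ppt_feasible d \<rho> \<sigma>"
    unfolding ppt_feasible_def using eqc psd\<sigma> tr psdG by blast
  moreover have "Re (mtrace (P_antisym d * \<sigma>)) = p" unfolding tPA c_def by simp
  ultimately show ?thesis unfolding \<sigma>_def c_def by simp
qed

theorem theorem1:
  fixes d :: nat and \<rho> :: "complex mat"
  assumes "is_state (d*d) \<rho>"
    and "\<rho> = P_antisym d * \<rho> * P_antisym d"
  shows "2 / (real d * (real d + 1) + 2) \<le> p_PPT d \<rho> \<and> p_PPT d \<rho> \<le> 1/2"
proof -
  define S where "S = {Re (mtrace (P_antisym d * \<sigma>)) | \<sigma>. ppt_feasible d \<rho> \<sigma>}"
  have pS: "2 / (real d * (real d + 1) + 2) \<in> S"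
  proof -
    obtain \<sigma> where "ppt_feasible d \<rho> \<sigma>" "Re (mtrace (P_antisym d * \<sigma>)) = 2 / (real d * (real d + 1) + 2)"
      using lower_feasible[OF assms] by blast
    then show ?thesis unfolding S_def by (metis (mono_tags, lifting) mem_Collect_eq)
  qed
  have ub: "\<And>x. x \<in> S \<Longrightarrow> x \<le> 1/2" unfolding S_def using upper by blast
  have bdd: "bdd_above S" using ub by (intro bdd_aboveI) blast
  have "2 / (real d * (real d + 1) + 2) \<le> Sup S" by (rule cSup_upper[OF pS bdd])
  moreover have "Sup S \<le> 1/2" using pS ub by (intro cSup_least) auto
  ultimately show ?thesis unfolding p_PPT_def S_def by simp
qed


end
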